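(* Let $\rho=3-2\sqrt2$, let $g$, $b_0,b_1,b_2$ be as in the context, let $B(x)=b_0+b_1x+b_2x^2$, and fix $\varphi\in(0,\pi)$. For $n\ge1$ let $\mathcal{S}(n)=\{\rho+(\rho/n)e^{i\theta}:\varphi\le|\theta|\le\pi\}$, an arc of the circle $|z-\rho|=\rho/n$ (with either orientation). Then for all integers $n\ge5$, \[\left|\frac{1}{2\pi i}\int_{\mathcal{S}(n)}\frac{g(z)}{z^{n+1}}\,dz\right|\le\rho^{-n}n^2\,\frac{4}{\rho^3}\,B(\pi+\log n).\]
   Context: Let $(d_n)_{n\ge0}$ be the rational sequence with $(d_0,\dots,d_6)=(72,1932,31248,\frac{790101}{2},\frac{17208645}{4},\frac{338898609}{8},\frac{1551478257}{4})$ satisfying $\sum_{k=0}^7 r_k(n)d_{n+k}=0$ for all $n\ge0$, where $r_0(n) = -(n+8)(n+7)(n+6)^2(12232n^3+298144n^2+2412586n+6469077)$, $r_1(n) = (n+8)(183480n^6+7655560n^5+131977142n^4+1202876299n^3+6112196895n^2+16418149668n+18219511026)$, $r_2(n) = -(n+8)(941864n^6+38326904n^5+644300514n^4+5727711699n^3+28407144241n^2+74557779538n+80949464718)$, $r_3(n) = 1993816n^7+97303624n^6+2021855198n^5+23184921987n^4+158457515673n^3+645518710454n^2+1451619424860n+1390493835900$, $r_4(n) = -1993816n^7-98090344n^6-2054897438n^5-23758375953n^4-163720428321n^3-672459054524n^2-1524577250976n-1472211879228$, $r_5(n) = (n+6)(941864n^6+40789672n^5+730497394n^4+6921881565n^3+36590122947n^2+102300885158n+118218544398)$,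 $r_6(n) = (n+6)(183480n^6+7756760n^5+135519142n^4+1252328453n^3+6456460129n^2+17612930492n+19872693550)$, $r_7(n) = (n+7)(n+6)(n+8)^2(12232n^3+215600n^2+1256970n+2435511)$. Let $f(z)=\sum_{n\ge0}d_nz^n$; it extends analytically to $\Delta=\{z:|z|<1\}\setminus[\rho,1]$. With the principal branch of $\log$ and $L(z)=\log\frac{1}{1-z/\rho}$, on $\Delta\cap\{|z-\rho|<\rho\}$ one has the unique decomposition $f(z)=C_1(z-\rho)^{-4}+C_2(z-\rho)^{-4}L(z)+(z-\rho)^{-3}(h_0(z)+h_1(z)L(z)+h_2(z)L(z)^2)$ with real constants $C_1,C_2$ and $h_0,h_1,h_2$ analytic on $|z-\rho|<\rho$. Let $\ell(z)=C_1(z-\rho)^{-4}+C_2(z-\rho)^{-4}L(z)$ and $g=f-\ell$. The constants $b_0\in[6.86\pm2.71\cdot10^{-4}]$, $b_1\in[2.85\pm3.20\cdot10^{-3}]$, $b_2\in[0.309\pm2.78\cdot10^{-4}]$ (where $[x\pm\epsilon]$ denotes $[x-\epsilon,x+\epsilon]$) satisfy $|h_j(z)|\le b_j$ for $j=0,1,2$ and all $|z-\rho|<1/8$. *)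

theory Defs
  imports "HOL-Complex_Analysis.Complex_Analysis"
begin

definition rho :: real where "rho = 3 - 2 * sqrt 2"

fun rcoef :: "nat \<Rightarrow> real \<Rightarrow> real" where
  "rcoef 0 n = -(n+8)*(n+7)*(n+6)^2*(12232*n^3+298144*n^2+2412586*n+6469077)"
| "rcoef (Suc 0) n = (n+8)*(183480*n^6+7655560*n^5+131977142*n^4+1202876299*n^3+6112196895*n^2+16418149668*n+18219511026)"
| "rcoef (Suc (Suc 0)) n = -(n+8)*(941864*n^6+38326904*n^5+644300514*n^4+5727711699*n^3+28407144241*n^2+74557779538*n+80949464718)"
| "rcoef (Suc (Suc (Suc 0))) n = 1993816*n^7+97303624*n^6+2021855198*n^5+23184921987*n^4+158457515673*n^3+645518710454*n^2+1451619424860*n+1390493835900"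
| "rcoef (Suc (Suc (Suc (Suc 0)))) n = -1993816*n^7-98090344*n^6-2054897438*n^5-23758375953*n^4-163720428321*n^3-672459054524*n^2-1524577250976*n-1472211879228"
| "rcoef (Suc (Suc (Suc (Suc (Suc 0))))) n = (n+6)*(941864*n^6+40789672*n^5+730497394*n^4+6921881565*n^3+36590122947*n^2+102300885158*n+118218544398)"
| "rcoef (Suc (Suc (Suc (Suc (Suc (Suc 0)))))) n = (n+6)*(183480*n^6+7756760*n^5+135519142*n^4+1252328453*n^3+6456460129*n^2+17612930492*n+19872693550)"
| "rcoef (Suc (Suc (Suc (Suc (Suc (Suc (Suc 0))))))) n = (n+7)*(n+6)*(n+8)^2*(12232*n^3+215600*n^2+1256970*n+2435511)"
| "rcoef _ n = 0"

definition Delta :: "complex set" where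
  "Delta = ball 0 1 - closed_segment (complex_of_real rho) 1"

definition Lfun :: "complex \<Rightarrow> complex" where
  "Lfun z = Ln (1 / (1 - z / complex_of_real rho))"

definition Bpoly :: "real \<Rightarrow> real \<Rightarrow> real \<Rightarrow> real \<Rightarrow> real" where
  "Bpoly b0 b1 b2 x = b0 + b1 * x + b2 * x^2"

end

theory Submission
  imports Defs
begin

lemma rho_bounds: "0 < rho" "rho < 1/4"
proof -
  have a: "1.4 < sqrt (2::real)" by (rule real_less_rsqrt) (simp add: power2_eq_square)
  have b: "sqrt (2::real) < 1.5" by (rule real_less_lsqrt) (auto simp: power2_eq_square)
  show "0 < rho" "rho < 1/4" using a b unfolding rho_def by auto
qed

lemma q_bound:
  fixes n :: nat assumes "5 \<le> n"
  shows "1/4 \<le> (1 - 1 / real n) ^ (n+1)"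
proof -
  consider "n = 5" | "n = 6" | "7 \<le> n" using assms by linarith
  then show ?thesis
  proof cases
    case 1 then show ?thesis by (simp add: power_divide)
  next
    case 2 then show ?thesis by (simp add: power_divide)
  next
    case 3
    define x where "x = 1 / real n"
    have pos: "0 < 1 - x" using 3 by (auto simp: x_def field_simps)
    have l0: "ln (1 / (1 - x)) \<le> 1 / (1 - x) - 1" using pos by (intro ln_le_minus_one) auto
    have l: "- (1 / (real n - 1)) \<le> ln (1 - x)"
    proof -
      have "1 / (1 - x) - 1 = 1 / (real n - 1)" using 3 by (simp add: x_def field_simps)
      moreover have "ln (1 / (1 - x)) = - ln (1 - x)" using pos by (simp add: ln_div)
      ultimately show ?thesis using l0 by linarith
    qed
    have e: "ln ((1 - x) ^ (n+1)) = real (n+1) * ln (1 - x)" by (rule ln_realpow)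
    have n7: "7 \<le> real n" using 3 by simp
    have "real (n+1) * (1 / (real n - 1)) = (real n + 1) / (real n - 1)" by simp
    also have "... \<le> 4/3" using n7 by (subst pos_divide_le_eq) auto
    also have "... \<le> 2 * ln 2" using ln2_ge_two_thirds by simp
    finally have "- (2 * ln 2) \<le> real (n+1) * ln (1 - x)"
    proof -
      assume A: "real (n+1) * (1 / (real n - 1)) \<le> 2 * ln 2"
      have "real (n+1) * (- (1 / (real n - 1))) \<le> real (n+1) * ln (1 - x)"
        using l by (intro mult_left_mono) auto
      then show ?thesis using A by simp
    qed
    moreover have "ln (1/4::real) = - (2 * ln 2)"
    proof -
      have "ln (4::real) = ln 2 + ln 2" using ln_mult[of "2::real" 2] by simp
      moreover have "ln (1/4::real) = - ln 4" using ln_div[of 1 4] by simp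
      ultimately show ?thesis by simp
    qed
    ultimately have "ln (1/4) \<le> ln ((1 - x) ^ (n+1))" using e by simp
    then show ?thesis unfolding x_def[symmetric] using pos by (simp)
  qed
qed

lemma trig_aux:
  assumes "0 < t" "t < 2*pi" "sin t = 0" shows "cos t < 0"
proof -
  obtain i :: int where i: "t = of_int i * pi" using assms(3) sin_zero_iff_int2 by auto
  have "0 < of_int i * pi" "of_int i * pi < 2 * pi" using assms i by auto
  hence "0 < i" "i < 2" by (auto simp: zero_less_mult_iff mult_less_cancel_right)
  hence "i = 1" by simp
  thus ?thesis using i by simp
qed

lemma point_facts:
  fixes n :: nat and \<phi> \<theta> :: real
  assumes n: "5 \<le> n" and th: "0 < \<theta>" "\<theta> < 2*pi"
  defines "c \<equiv> complex_of_real rho"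
  defines "z \<equiv> c + complex_of_real (rho / real n) * cis \<theta>"
  shows "z \<in> Delta" "z \<in> ball c rho" "z \<in> ball c (1/8)" "z \<noteq> c"
    "norm (z - c) = rho / real n" "rho - rho / real n \<le> norm z"
    "1 / (1 - z / c) \<notin> \<real>\<^sub>\<le>\<^sub>0" "norm (1 / (1 - z / c)) = real n"
proof -
  have r0: "0 < rho" "rho < 1/4" using rho_bounds by auto
  have np: "0 < real n" "5 \<le> real n" using n by auto
  have rr: "rho / real n \<le> rho / 5" using r0 np by (intro divide_left_mono) auto
  have rpos: "0 < rho / real n" using r0 np by auto
  have rr1: "rho / real n < rho"
  proof -
    have "rho * 1 < rho * real n" using r0 np by (intro mult_strict_left_mono) auto
    then show ?thesis using np by (subst pos_divide_less_eq) auto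
  qed
  have rr2: "rho / real n < 1/8" using rr r0 by linarith
  have nz: "norm (z - c) = rho / real n" unfolding z_def using rpos r0 by (simp add: norm_mult norm_divide)
  show "norm (z - c) = rho / real n" by (fact nz)
  show "z \<noteq> c" using nz rpos by auto
  show "z \<in> ball c rho" using nz rr1 by (simp add: dist_norm norm_minus_commute)
  show "z \<in> ball c (1/8)" using nz rr2 by (simp add: dist_norm norm_minus_commute)
  have "norm c - norm (z - c) \<le> norm z" by (metis norm_triangle_ineq2 add_diff_cancel_left' diff_add_cancel norm_minus_commute)
  then show "rho - rho / real n \<le> norm z" using nz r0 by (simp add: c_def)
  have nz1: "norm z < 1"
  proof -
    have "norm z \<le> norm c + norm (z - c)" by (metis norm_triangle_ineq add_diff_cancel_left' diff_add_cancel)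
    then show ?thesis using nz rr r0 by (simp add: c_def)
  qed
  have nosc: "\<not> (sin \<theta> = 0 \<and> 0 \<le> cos \<theta>)" using trig_aux[OF th] by auto
  have "z \<notin> closed_segment c 1"
  proof
    assume "z \<in> closed_segment c 1"
    then obtain u :: real where u: "0 \<le> u" "u \<le> 1" "z = (1 - u) *\<^sub>R c + u *\<^sub>R 1"
      unfolding closed_segment_def by auto
    have "Im z = 0" using u by (simp add: c_def)
    moreover have "Re z \<ge> rho"
    proof -
      have "Re z = (1 - u) * rho + u" using u(3) by (simp add: c_def)
      moreover have "0 \<le> u * (1 - rho)" using u r0 by simp
      ultimately show ?thesis by (simp add: algebra_simps)
    qed
    moreover have "Im z = rho / real n * sin \<theta>" "Re z = rho + rho / real n * cos \<theta>"
      by (simp_all add: z_def c_def cis.sel)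
    ultimately have a: "rho / real n * sin \<theta> = 0" "0 \<le> rho / real n * cos \<theta>"
      by linarith+
    have "sin \<theta> = 0" using a(1) rpos by (metis mult_eq_0_iff less_irrefl)
    moreover have "0 \<le> cos \<theta>" using a(2) rpos by (metis zero_le_mult_iff not_less)
    ultimately show False using nosc by auto
  qed
  then show "z \<in> Delta" using nz1 unfolding Delta_def c_def by auto
  have w: "1 / (1 - z / c) = - of_real (real n) * cis (- \<theta>)"
    using r0 np unfolding z_def c_def by (simp add: field_simps cis_divide[symmetric] cis_mult)
  show "norm (1 / (1 - z / c)) = real n" unfolding w by (simp add: norm_mult)
  show "1 / (1 - z / c) \<notin> \<real>\<^sub>\<le>\<^sub>0"
  proof
    assume "1 / (1 - z / c) \<in> \<real>\<^sub>\<le>\<^sub>0"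
    then have "Im (1 / (1 - z / c)) = 0" "Re (1 / (1 - z / c)) \<le> 0"
      by (auto simp: complex_nonpos_Reals_iff)
    then have "sin \<theta> = 0" "0 \<le> cos \<theta>" unfolding w using np
      by (auto simp: cis.sel zero_le_mult_iff mult_le_0_iff)
    with nosc show False by auto
  qed
qed

theorem proposition3p7:
  fixes d :: "nat \<Rightarrow> real"
    and f g h0 h1 h2 :: "complex \<Rightarrow> complex"
    and C1 C2 b0 b1 b2 :: real
  assumes d_init: "d 0 = 72" "d 1 = 1932" "d 2 = 31248" "d 3 = 790101 / 2"
      "d 4 = 17208645 / 4" "d 5 = 338898609 / 8" "d 6 = 1551478257 / 4"
    and d_rec: "\<forall>n. (\<Sum>k\<le>7. rcoef k (real n) * d (n + k)) = 0"
    and f_holo: "f holomorphic_on Delta"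
    and f_series: "\<exists>r>0. \<forall>z\<in>ball 0 r. (\<lambda>n. complex_of_real (d n) * z ^ n) sums f z"
    and h_holo: "h0 holomorphic_on ball (complex_of_real rho) rho"
      "h1 holomorphic_on ball (complex_of_real rho) rho"
      "h2 holomorphic_on ball (complex_of_real rho) rho"
    and decomp: "\<forall>z\<in>Delta \<inter> ball (complex_of_real rho) rho.
       f z = complex_of_real C1 / (z - complex_of_real rho) ^ 4
           + complex_of_real C2 / (z - complex_of_real rho) ^ 4 * Lfun z
           + (h0 z + h1 z * Lfun z + h2 z * (Lfun z)^2) / (z - complex_of_real rho) ^ 3"
    and g_def: "\<forall>z. g z = f z - (complex_of_real C1 / (z - complex_of_real rho) ^ 4
           + complex_of_real C2 / (z - complex_of_real rho) ^ 4 * Lfun z)"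
    and b_int: "b0 \<in> {6.86 - 2.71 / 10^4 .. 6.86 + 2.71 / 10^4}"
      "b1 \<in> {2.85 - 3.20 / 10^3 .. 2.85 + 3.20 / 10^3}"
      "b2 \<in> {0.309 - 2.78 / 10^4 .. 0.309 + 2.78 / 10^4}"
    and h_bound: "\<forall>z\<in>ball (complex_of_real rho) (1/8).
       norm (h0 z) \<le> b0 \<and> norm (h1 z) \<le> b1 \<and> norm (h2 z) \<le> b2"
  shows "\<forall>(\<phi>::real) (n::nat). 0 < \<phi> \<and> \<phi> < pi \<and> 5 \<le> n \<longrightarrow>
     (\<forall>\<gamma>\<in>{part_circlepath (complex_of_real rho) (rho / real n) \<phi> (2 * pi - \<phi>),
            part_circlepath (complex_of_real rho) (rho / real n) (2 * pi - \<phi>) \<phi>}.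
        (\<lambda>z. g z / z ^ (n + 1)) contour_integrable_on \<gamma> \<and>
        norm (contour_integral \<gamma> (\<lambda>z. g z / z ^ (n + 1)) / (2 * complex_of_real pi * \<i>))
          \<le> inverse (rho ^ n) * (real n)^2 * (4 / rho ^ 3) * Bpoly b0 b1 b2 (pi + ln (real n)))"
proof (intro allI impI)
  fix \<phi> :: real and n :: nat
  assume H: "0 < \<phi> \<and> \<phi> < pi \<and> 5 \<le> n"
  hence ph: "0 < \<phi>" "\<phi> < pi" and n: "5 \<le> n" by auto
  define c where "c = complex_of_real rho"
  define r where "r = rho / real n"
  define X where "X = pi + ln (real n)"
  define F where "F = (\<lambda>z. g z / z ^ (n + 1))"
  define Bp where "Bp = Bpoly b0 b1 b2 X"
  define \<gamma>1 where "\<gamma>1 = part_circlepath c r \<phi> (2 * pi - \<phi>)"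
  define \<gamma>2 where "\<gamma>2 = part_circlepath c r (2 * pi - \<phi>) \<phi>"
  define S where "S = path_image \<gamma>1"
  have r0: "0 < rho" "rho < 1/4" by (rule rho_bounds)+
  have np: "5 \<le> real n" "0 < real n" using n by auto
  have rpos: "0 < r" unfolding r_def using r0 np by auto
  have rr1: "r < rho"
  proof -
    have "rho * 1 < rho * real n" using r0 np by (intro mult_strict_left_mono) auto
    then show ?thesis unfolding r_def using np by (subst pos_divide_less_eq) auto
  qed
  have S2: "path_image \<gamma>2 = S" unfolding S_def \<gamma>1_def \<gamma>2_def
    by (metis path_image_reversepath reversepath_part_circlepath)
  have ptS: "z \<in> Delta \<and> z \<in> ball c rho \<and> z \<in> ball c (1/8) \<and> z \<noteq> c \<and> norm (z - c) = r
      \<and> rho - r \<le> norm z \<and> 1 / (1 - z / c) \<notin> \<real>\<^sub>\<le>\<^sub>0 \<and> norm (1 / (1 - z / c)) = real n"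
    if "z \<in> S" for z
  proof -
    have le: "\<phi> \<le> 2 * pi - \<phi>" using ph by simp
    from that obtain \<theta> where th: "\<theta> \<in> {\<phi> .. 2 * pi - \<phi>}" and z: "z = c + complex_of_real r * cis \<theta>"
      unfolding S_def \<gamma>1_def path_image_part_circlepath' closed_segment_eq_real_ivl using le by auto
    have "0 < \<theta>" "\<theta> < 2 * pi" using th ph by auto
    from point_facts[OF n this] show ?thesis unfolding z c_def r_def by blast
  qed
  have z0: "z \<noteq> 0" if "z \<in> S" for z
  proof -
    have "rho - r \<le> norm z" using ptS[OF that] by blast
    then show ?thesis using rr1 by auto
  qed
  have c0: "c \<noteq> 0" unfolding c_def using r0 by simp
  have cf: "continuous_on S f"
    using f_holo by (rule holomorphic_on_imp_continuous_on[THEN continuous_on_subset]) (use ptS in blast)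
  have cont0: "continuous_on S (\<lambda>z. (f z - (complex_of_real C1 / (z - c) ^ 4
           + complex_of_real C2 / (z - c) ^ 4 * Ln (1 / (1 - z / c)))) / z ^ (n + 1))"
  proof -
    have facts: "(z - c) ^ 4 \<noteq> 0 \<and> z - c \<noteq> 0 \<and> 1 - z / c \<noteq> 0 \<and> 1 / (1 - z / c) \<notin> \<real>\<^sub>\<le>\<^sub>0
        \<and> z ^ (n + 1) \<noteq> 0 \<and> z \<noteq> 0" if zS: "z \<in> S" for z
    proof -
      note p = ptS[OF zS]
      have "1 - z / c \<noteq> 0" using p c0 by (auto simp: field_simps)
      then show ?thesis using p z0[OF zS] by simp
    qed
    have c1: "continuous_on S (\<lambda>z. 1 / (1 - z / c))"
      by (rule continuous_on_divide) (auto intro!: continuous_intros simp: c0 dest: facts)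
    have cL: "continuous_on S (\<lambda>z. Ln (1 / (1 - z / c)))"
      by (rule continuous_on_Ln'[OF c1]) (simp add: facts)
    have c4: "continuous_on S (\<lambda>z. (z - c) ^ 4)" by (intro continuous_intros)
    have c5: "continuous_on S (\<lambda>z. z ^ (n + 1))" by (intro continuous_intros)
    have c6: "continuous_on S (\<lambda>z. complex_of_real C1 / (z - c) ^ 4)"
      by (rule continuous_on_divide[OF continuous_on_const c4]) (use facts in auto)
    have c7: "continuous_on S (\<lambda>z. complex_of_real C2 / (z - c) ^ 4)"
      by (rule continuous_on_divide[OF continuous_on_const c4]) (use facts in auto)
    have c8: "continuous_on S (\<lambda>z. f z - (complex_of_real C1 / (z - c) ^ 4
           + complex_of_real C2 / (z - c) ^ 4 * Ln (1 / (1 - z / c))))"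
      by (intro continuous_on_diff continuous_on_add continuous_on_mult cf c6 c7 cL)
    show ?thesis
      by (rule continuous_on_divide[OF c8 c5]) (use facts in auto)
  qed
  have cont: "continuous_on S F"
    using cont0 by (rule continuous_on_cong[THEN iffD1, rotated 2]) (auto simp: F_def g_def Lfun_def c_def)
  have int1: "F contour_integrable_on \<gamma>1"
    unfolding \<gamma>1_def by (rule contour_integrable_continuous_part_circlepath) (use cont in \<open>simp add: S_def \<gamma>1_def\<close>)
  have int2: "F contour_integrable_on \<gamma>2"
    unfolding \<gamma>2_def by (rule contour_integrable_continuous_part_circlepath) (use cont S2 in \<open>simp add: \<gamma>2_def\<close>)
  have bnn: "0 \<le> b0" "0 \<le> b1" "0 \<le> b2" using b_int by auto
  have X0: "0 \<le> X" unfolding X_def using np pi_gt_zero by simp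
  have Bp0: "0 \<le> Bp" unfolding Bp_def Bpoly_def using bnn X0 by simp
  define M where "M = Bp / r ^ 3 / (rho - r) ^ (n + 1)"
  have M0: "0 \<le> M" unfolding M_def using Bp0 rpos rr1 by simp
  have bound: "norm (F z) \<le> M" if zS: "z \<in> S" for z
  proof -
    note p = ptS[OF zS]
    define L where "L = Lfun z"
    have gz: "g z = (h0 z + h1 z * L + h2 z * L ^ 2) / (z - c) ^ 3"
      using decomp p g_def unfolding L_def c_def by auto
    have Ldef: "L = Ln (1 / (1 - z / c))" unfolding L_def Lfun_def c_def by simp
    have w0: "1 / (1 - z / c) \<noteq> 0" using p np by (metis norm_zero less_irrefl)
    have LX: "norm L \<le> X"
    proof -
      have "norm L \<le> \<bar>Re L\<bar> + \<bar>Im L\<bar>" by (rule cmod_le)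
      moreover have "Re L = ln (real n)" unfolding Ldef using w0 p by simp
      moreover have "\<bar>Im L\<bar> \<le> pi" unfolding Ldef using mpi_less_Im_Ln[OF w0] Im_Ln_le_pi[OF w0]
        by linarith
      moreover have "0 \<le> ln (real n)" using np by simp
      ultimately show ?thesis unfolding X_def by linarith
    qed
    have zb: "z \<in> ball (complex_of_real rho) (1/8)" using p unfolding c_def by blast
    have hb: "norm (h0 z) \<le> b0" "norm (h1 z) \<le> b1" "norm (h2 z) \<le> b2"
      using h_bound[rule_format, OF zb] by auto
    have num: "norm (h0 z + h1 z * L + h2 z * L ^ 2) \<le> Bp"
    proof -
      have "norm (h0 z + h1 z * L + h2 z * L ^ 2) \<le> norm (h0 z) + norm (h1 z) * norm L + norm (h2 z) * norm L ^ 2"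
      proof -
        have "norm (h0 z + h1 z * L + h2 z * L ^ 2) \<le> norm (h0 z + h1 z * L) + norm (h2 z * L ^ 2)"
          by (rule norm_triangle_ineq)
        also have "... \<le> norm (h0 z) + norm (h1 z * L) + norm (h2 z * L ^ 2)"
          using norm_triangle_ineq[of "h0 z" "h1 z * L"] by linarith
        finally show ?thesis by (simp add: norm_mult norm_power)
      qed
      also have "... \<le> b0 + b1 * X + b2 * X ^ 2"
        using hb LX bnn by (intro add_mono mult_mono power_mono) auto
      finally show ?thesis unfolding Bp_def Bpoly_def .
    qed
    have den1: "norm ((z - c) ^ 3) = r ^ 3" using p by (simp add: norm_power)
    have den2: "(rho - r) ^ (n + 1) \<le> norm (z ^ (n + 1))"
      unfolding norm_power using p rr1 by (intro power_mono) auto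
    have "norm (F z) = norm (h0 z + h1 z * L + h2 z * L ^ 2) / r ^ 3 / norm (z ^ (n + 1))"
      unfolding F_def gz norm_divide den1 ..
    also have "... \<le> Bp / r ^ 3 / (rho - r) ^ (n + 1)"
      using num den2 rpos rr1 Bp0 by (intro divide_mono) auto
    finally show ?thesis unfolding M_def .
  qed
  have I1: "norm (contour_integral \<gamma>1 F) \<le> M * r * (2 * pi)"
  proof -
    have "norm (contour_integral \<gamma>1 F) \<le> M * r * ((2 * pi - \<phi>) - \<phi>)"
      using has_contour_integral_integral[OF int1] M0 rpos ph bound
      unfolding \<gamma>1_def S_def
      by (intro has_contour_integral_bound_part_circlepath) (auto simp: \<gamma>1_def)
    also have "... \<le> M * r * (2 * pi)" using M0 rpos ph by (intro mult_left_mono) auto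
    finally show ?thesis .
  qed
  have I2: "contour_integral \<gamma>2 F = - contour_integral \<gamma>1 F"
    unfolding \<gamma>1_def \<gamma>2_def
    by (metis contour_integral_reversepath reversepath_part_circlepath valid_path_part_circlepath)
  have fin: "M * r \<le> inverse (rho ^ n) * (real n)^2 * (4 / rho ^ 3) * Bp"
  proof -
    define q where "q = (1 - 1 / real n) ^ (n + 1)"
    have q4: "1/4 \<le> q" unfolding q_def by (rule q_bound[OF n])
    have "rho - r = rho * (1 - 1 / real n)" unfolding r_def by (simp add: algebra_simps)
    hence rq: "(rho - r) ^ (n + 1) = rho ^ (n + 1) * q" unfolding q_def by (simp add: power_mult_distrib)
    have "M * r = Bp * (real n)^2 / (rho ^ (n + 3) * q)"
      unfolding M_def rq using r0 np q4 unfolding r_def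
      by (simp add: field_simps power2_eq_square power_add power3_eq_cube)
    also have "... \<le> Bp * (real n)^2 / (rho ^ (n + 3) * (1/4))"
      using q4 r0 Bp0 by (intro divide_left_mono mult_left_mono mult_pos_pos) auto
    also have "... = inverse (rho ^ n) * (real n)^2 * (4 / rho ^ 3) * Bp"
      using r0 by (simp add: field_simps power_add)
    finally show ?thesis .
  qed
  show "\<forall>\<gamma>\<in>{part_circlepath (complex_of_real rho) (rho / real n) \<phi> (2 * pi - \<phi>),
            part_circlepath (complex_of_real rho) (rho / real n) (2 * pi - \<phi>) \<phi>}.
        (\<lambda>z. g z / z ^ (n + 1)) contour_integrable_on \<gamma> \<and>
        norm (contour_integral \<gamma> (\<lambda>z. g z / z ^ (n + 1)) / (2 * complex_of_real pi * \<i>))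
          \<le> inverse (rho ^ n) * (real n)^2 * (4 / rho ^ 3) * Bpoly b0 b1 b2 (pi + ln (real n))"
  proof -
    have key: "norm (contour_integral \<gamma> F / (2 * complex_of_real pi * \<i>)) \<le> M * r"
      if "norm (contour_integral \<gamma> F) \<le> M * r * (2 * pi)" for \<gamma>
    proof -
      have "norm (2 * complex_of_real pi * \<i>) = 2 * pi" by (simp add: norm_mult)
      then show ?thesis using that by (simp add: norm_divide divide_le_eq mult.commute mult.left_commute)
    qed
    have "norm (contour_integral \<gamma>2 F) \<le> M * r * (2 * pi)" using I1 I2 by simp
    then show ?thesis
      using key[OF I1] key int1 int2 fin
      unfolding \<gamma>1_def \<gamma>2_def F_def c_def r_def Bp_def X_def
      by (auto intro: order_trans)
  qed
qed

end
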